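(* Let $X=(A_1,\dots,A_k)$ be a Markov tree-shift over $\mathcal{A}=\{0,\dots,d-1\}$. Then $$\limsup_{n\to\infty}\frac{\log p(n)}{1+k+\cdots+k^n}\le\frac1k\Big(\log d+\log\|A_1\|_{op}+\cdots+\log\|A_k\|_{op}\Big),$$ so in particular $h_{PS}(X)\le\frac1k(\log d+\sum_{m=1}^k\log\|A_m\|_{op})$ whenever $h_{PS}(X)$ exists.
   Context: $\Sigma=\{a_1,\dots,a_k\}$, $k\ge2$. For $\{0,1\}$-valued $d\times d$ matrices $A_1,\dots,A_k$ (each row and column of each containing at least one $1$), $X=(A_1,\dots,A_k)$ is the set of trees $t:\Sigma^*\to\mathcal{A}$ with $(A_m)_{t_x,t_{xa_m}}=1$ for all nodes $x$ and all $m$. $p(n)$ is the number of allowed blocks of length $n$ (labellings $t|_{\Delta_n}$, $t\in X$, $\Delta_n=\bigcup_{i=0}^n\Sigma^i$). $h_{PS}(X)=\lim_n\frac{\log p(n)}{1+k+\cdots+k^n}$. $\|M\|_{op}=\sup_{\|v\|_\infty=1}\|Mv\|_\infty$ with $\|v\|_\infty=\max_i|v_i|$; for a nonnegative matrix this is the maximal row sum. *)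

theory Defs
  imports Complex_Main "HOL-Library.FuncSet" "HOL-Library.Extended_Real"
begin

text \<open>Alphabet \<Sigma> = {a_1,...,a_k} is represented by the indices 0..k-1 (a_{m+1} ~ m);
  nodes of the tree are words in lists {..<k}; the symbol alphabet is {0,...,d-1};
  the transition matrices A_1..A_k are given as A 0, ..., A (k-1), each a
  d x d real matrix indexed by {0..<d}.\<close>

definition words :: "nat \<Rightarrow> nat list set" where
  "words k = lists {..<k}"

definition Delta :: "nat \<Rightarrow> nat \<Rightarrow> nat list set" where
  "Delta k n = {w \<in> words k. length w \<le> n}"

definition tree_shift :: "nat \<Rightarrow> nat \<Rightarrow> (nat \<Rightarrow> nat \<Rightarrow> nat \<Rightarrow> real) \<Rightarrow> (nat list \<Rightarrow> nat) set" where
  "tree_shift k d A = {t. (\<forall>w\<in>words k. t w < d) \<and>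
      (\<forall>w\<in>words k. \<forall>m<k. A m (t w) (t (w @ [m])) = 1)}"

definition num_blocks :: "nat \<Rightarrow> nat \<Rightarrow> (nat \<Rightarrow> nat \<Rightarrow> nat \<Rightarrow> real) \<Rightarrow> nat \<Rightarrow> nat" where
  "num_blocks k d A n = card ((\<lambda>t. restrict t (Delta k n)) ` tree_shift k d A)"

definition sup_norm :: "nat \<Rightarrow> (nat \<Rightarrow> real) \<Rightarrow> real" where
  "sup_norm d v = (MAX i\<in>{..<d}. \<bar>v i\<bar>)"

definition op_norm :: "nat \<Rightarrow> (nat \<Rightarrow> nat \<Rightarrow> real) \<Rightarrow> real" where
  "op_norm d M = Sup {sup_norm d (\<lambda>i. \<Sum>j<d. M i j * v j) | v. sup_norm d v = 1}"

definition markov_matrices :: "nat \<Rightarrow> nat \<Rightarrow> (nat \<Rightarrow> nat \<Rightarrow> nat \<Rightarrow> real) \<Rightarrow> bool" where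
  "markov_matrices k d A \<longleftrightarrow>
     (\<forall>m<k. (\<forall>i<d. \<forall>j<d. A m i j = 0 \<or> A m i j = 1) \<and>
            (\<forall>i<d. \<exists>j<d. A m i j = 1) \<and> (\<forall>j<d. \<exists>i<d. A m i j = 1))"

end

theory Submission imports Defs begin

definition lev :: "nat \<Rightarrow> nat \<Rightarrow> nat list set" where
  "lev k n = {w \<in> words k. length w = n}"

lemma lev_Suc: "lev k (Suc n) = (\<lambda>(u,m). u @ [m]) ` (lev k n \<times> {..<k})"
proof (rule set_eqI, rule iffI)
  fix w assume w: "w \<in> lev k (Suc n)"
  then have "w \<noteq> []" by (auto simp: lev_def)
  then have e: "w = butlast w @ [last w]" by simp
  have "butlast w \<in> lev k n" "last w < k" using w \<open>w \<noteq> []\<close>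
    by (auto simp: lev_def words_def in_set_butlastD)
  then show "w \<in> (\<lambda>(u,m). u @ [m]) ` (lev k n \<times> {..<k})"
    using e by (intro image_eqI[of _ _ "(butlast w, last w)"]) auto
qed (auto simp: lev_def words_def)

lemma inj_snoc: "inj_on (\<lambda>(u,m). u @ [m]) X" by (auto simp: inj_on_def)

lemma lev_fin_card: "finite (lev k n) \<and> card (lev k n) = k ^ n"
proof (induction n)
  case 0
  have "lev k 0 = {[]}" by (auto simp: lev_def words_def)
  then show ?case by simp
next
  case (Suc n)
  then show ?case unfolding lev_Suc
    by (simp add: card_image[OF inj_snoc] card_cartesian_product)
qed

lemma Delta_Suc: "Delta k (Suc n) = Delta k n \<union> lev k (Suc n)"
  by (auto simp: Delta_def lev_def)

lemma Delta_disj: "Delta k n \<inter> lev k (Suc n) = {}"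
  by (auto simp: Delta_def lev_def)

lemma finite_Delta: "finite (Delta k n)"
proof -
  have "Delta k n \<subseteq> {xs. set xs \<subseteq> {..<k} \<and> length xs \<le> n}"
    by (auto simp: Delta_def words_def)
  then show ?thesis using finite_lists_length_le[of "{..<k}" n] finite_subset by blast
qed

definition Cset :: "nat \<Rightarrow> nat \<Rightarrow> (nat \<Rightarrow> nat \<Rightarrow> nat \<Rightarrow> real) \<Rightarrow> nat \<Rightarrow> (nat list \<Rightarrow> nat) set" where
  "Cset k d A n = {f \<in> Delta k n \<rightarrow>\<^sub>E {..<d}.
      \<forall>w\<in>words k. length w < n \<longrightarrow> (\<forall>m<k. A m (f w) (f (w @ [m])) = 1)}"

lemma finite_Cset: "finite (Cset k d A n)"
proof -
  have "Cset k d A n \<subseteq> Delta k n \<rightarrow>\<^sub>E {..<d}" by (auto simp: Cset_def)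
  moreover have "finite (Delta k n \<rightarrow>\<^sub>E {..<d})" by (intro finite_PiE finite_Delta) auto
  ultimately show ?thesis by (rule finite_subset)
qed

lemma blocks_le: "num_blocks k d A n \<le> card (Cset k d A n)"
proof -
  have "(\<lambda>t. restrict t (Delta k n)) ` tree_shift k d A \<subseteq> Cset k d A n"
  proof (rule subsetI, elim imageE)
    fix f t assume f: "f = restrict t (Delta k n)" and t: "t \<in> tree_shift k d A"
    have "f \<in> Delta k n \<rightarrow>\<^sub>E {..<d}" using t f by (auto simp: tree_shift_def Delta_def)
    moreover have "\<forall>w\<in>words k. length w < n \<longrightarrow> (\<forall>m<k. A m (f w) (f (w @ [m])) = 1)"
    proof (intro ballI impI allI)
      fix w m assume w: "w \<in> words k" "length w < n" "m < k"
      then have "w \<in> Delta k n" "w @ [m] \<in> Delta k n" by (auto simp: Delta_def words_def)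
      then show "A m (f w) (f (w @ [m])) = 1" using t w f by (simp add: tree_shift_def)
    qed
    ultimately show "f \<in> Cset k d A n" by (simp add: Cset_def)
  qed
  then show ?thesis unfolding num_blocks_def by (rule card_mono[OF finite_Cset])
qed

lemma op_norm_ge_row:
  assumes "d \<ge> 1" "i < d"
  shows "(\<Sum>j<d. M i j) \<le> op_norm d M"
proof -
  let ?S = "{sup_norm d (\<lambda>i. \<Sum>j<d. M i j * v j) | v. sup_norm d v = 1}"
  have ne: "{..<d} \<noteq> {}" using assms by auto
  have one: "sup_norm d (\<lambda>_. 1) = 1" unfolding sup_norm_def using ne
    by (simp add: Max_const)
  have mem: "sup_norm d (\<lambda>i. \<Sum>j<d. M i j) \<in> ?S"
    using one by (auto intro!: exI[of _ "\<lambda>_. 1"])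
  define K where "K = (\<Sum>i<d. \<Sum>j<d. \<bar>M i j\<bar>)"
  have bdd: "bdd_above ?S"
  proof (rule bdd_aboveI, clarify)
    fix v assume v: "sup_norm d v = 1"
    have vb: "\<bar>v j\<bar> \<le> 1" if "j < d" for j
      using v that unfolding sup_norm_def by (metis Max_ge finite_imageI finite_lessThan imageI lessThan_iff)
    show "sup_norm d (\<lambda>i. \<Sum>j<d. M i j * v j) \<le> K"
      unfolding sup_norm_def
    proof (subst Max_le_iff, simp, use ne in simp, clarify)
      fix i assume i: "i < d"
      have "\<bar>\<Sum>j<d. M i j * v j\<bar> \<le> (\<Sum>j<d. \<bar>M i j * v j\<bar>)" by (rule sum_abs)
      also have "\<dots> \<le> (\<Sum>j<d. \<bar>M i j\<bar>)"
        by (rule sum_mono) (auto simp: abs_mult intro: mult_left_le vb)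
      also have "\<dots> \<le> K" unfolding K_def
        by (rule member_le_sum[where f="\<lambda>i. \<Sum>j<d. \<bar>M i j\<bar>"]) (use i in auto)
      finally show "\<bar>\<Sum>j<d. M i j * v j\<bar> \<le> K" .
    qed
  qed
  have "(\<Sum>j<d. M i j) \<le> \<bar>\<Sum>j<d. M i j\<bar>" by simp
  also have "\<dots> \<le> sup_norm d (\<lambda>i. \<Sum>j<d. M i j)"
    unfolding sup_norm_def using assms by (intro Max_ge) auto
  also have "\<dots> \<le> op_norm d M" unfolding op_norm_def by (rule cSup_upper[OF mem bdd])
  finally show ?thesis .
qed

lemma card_row_le:
  assumes mm: "markov_matrices k d A" and d: "d \<ge> 1" and m: "m < k" and i: "i < d"
  shows "real (card {j. j < d \<and> A m i j = 1}) \<le> op_norm d (A m)"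
proof -
  let ?F = "{j. j < d \<and> A m i j = 1}"
  have fin: "finite ?F" by simp
  have "real (card ?F) = (\<Sum>j\<in>?F. A m i j)" by simp
  also have "\<dots> \<le> (\<Sum>j<d. A m i j)"
  proof (rule sum_mono2)
    show "\<And>b. b \<in> {..<d} - ?F \<Longrightarrow> 0 \<le> A m i b"
      using mm m i unfolding markov_matrices_def by force
  qed auto
  also have "\<dots> \<le> op_norm d (A m)" by (rule op_norm_ge_row[OF d i])
  finally show ?thesis .
qed

lemma op_norm_ge1:
  assumes mm: "markov_matrices k d A" and d: "d \<ge> 1" and m: "m < k"
  shows "1 \<le> op_norm d (A m)"
proof -
  obtain j where j: "j < d" "A m 0 j = 1" using mm m d unfolding markov_matrices_def by force
  have "card {j. j < d \<and> A m 0 j = 1} \<ge> 1"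
  proof -
    have "j \<in> {j. j < d \<and> A m 0 j = 1}" using j by simp
    then have "{j. j < d \<and> A m 0 j = 1} \<noteq> {}" by blast
    then show ?thesis by (simp add: Suc_leI card_gt_0_iff)
  qed
  then show ?thesis using card_row_le[OF mm d m, of 0] d by linarith
qed

lemma card_step:
  assumes mm: "markov_matrices k d A" and d: "d \<ge> 1"
  shows "real (card (Cset k d A (Suc n))) \<le>
           real (card (Cset k d A n)) * (\<Prod>m<k. op_norm d (A m)) ^ (k ^ n)"
proof -
  let ?L = "lev k (Suc n)"
  define F where "F g w = {j. j < d \<and> A (last w) (g (butlast w)) j = 1}" for g :: "nat list \<Rightarrow> nat" and w
  define \<phi> where "\<phi> f = (restrict f (Delta k n), restrict f ?L)" for f :: "nat list \<Rightarrow> nat"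
  define P where "P = (\<Prod>m<k. op_norm d (A m))"
  have finL: "finite ?L" using lev_fin_card by blast
  have inj: "inj_on \<phi> (Cset k d A (Suc n))"
  proof (rule inj_onI)
    fix f g assume f: "f \<in> Cset k d A (Suc n)" and g: "g \<in> Cset k d A (Suc n)" and e: "\<phi> f = \<phi> g"
    show "f = g"
    proof
      fix x
      show "f x = g x"
      proof (cases "x \<in> Delta k n")
        case True then show ?thesis using e unfolding \<phi>_def by (metis Pair_inject restrict_apply')
      next
        case False
        show ?thesis
        proof (cases "x \<in> ?L")
          case True then show ?thesis using e unfolding \<phi>_def by (metis Pair_inject restrict_apply')
        next
          case False2: False
          then have "x \<notin> Delta k (Suc n)" using False Delta_Suc by blast
          then show ?thesis using f g by (auto simp: Cset_def PiE_def extensional_def)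
        qed
      qed
    qed
  qed
  have sub: "\<phi> ` Cset k d A (Suc n) \<subseteq> Sigma (Cset k d A n) (\<lambda>g. PiE ?L (F g))"
  proof (rule subsetI, elim imageE)
    fix p f assume p: "p = \<phi> f" and f: "f \<in> Cset k d A (Suc n)"
    have fpi: "f \<in> Delta k (Suc n) \<rightarrow>\<^sub>E {..<d}" using f by (simp add: Cset_def)
    have fc: "\<And>w m. w \<in> words k \<Longrightarrow> length w < Suc n \<Longrightarrow> m < k \<Longrightarrow> A m (f w) (f (w @ [m])) = 1"
      using f by (simp add: Cset_def)
    have g1: "restrict f (Delta k n) \<in> Cset k d A n"
      unfolding Cset_def
    proof (intro CollectI conjI ballI impI allI)
      show "restrict f (Delta k n) \<in> Delta k n \<rightarrow>\<^sub>E {..<d}"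
        using fpi Delta_Suc by fastforce
    next
      fix w m assume w: "w \<in> words k" "length w < n" "m < k"
      then have "w \<in> Delta k n" "w @ [m] \<in> Delta k n" by (auto simp: Delta_def words_def)
      then show "A m (restrict f (Delta k n) w) (restrict f (Delta k n) (w @ [m])) = 1"
        using fc[of w m] w by simp
    qed
    have g2: "restrict f ?L \<in> PiE ?L (F (restrict f (Delta k n)))"
    proof (rule PiE_I)
      fix w assume w: "w \<in> ?L"
      then have wne: "w \<noteq> []" by (auto simp: lev_def)
      then have e: "w = butlast w @ [last w]" by simp
      have bl: "butlast w \<in> words k" "length (butlast w) < Suc n" "last w < k"
        using w wne by (auto simp: lev_def words_def in_set_butlastD)
      have "butlast w \<in> Delta k n" using w by (auto simp: lev_def Delta_def words_def in_set_butlastD)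
      moreover have "f w < d" using fpi w Delta_Suc by blast
      moreover have "A (last w) (f (butlast w)) (f w) = 1"
        using fc[OF bl] e by simp
      ultimately show "restrict f ?L w \<in> F (restrict f (Delta k n)) w"
        using w by (simp add: F_def)
    qed auto
    show "p \<in> Sigma (Cset k d A n) (\<lambda>g. PiE ?L (F g))"
      using g1 g2 p by (simp add: \<phi>_def)
  qed
  have finF: "finite (F g w)" for g w by (simp add: F_def)
  have fin: "finite (Sigma (Cset k d A n) (\<lambda>g. PiE ?L (F g)))"
    by (intro finite_SigmaI finite_Cset finite_PiE finL finF)
  have "card (Cset k d A (Suc n)) \<le> card (Sigma (Cset k d A n) (\<lambda>g. PiE ?L (F g)))"
    by (rule card_inj_on_le[OF inj sub fin])
  also have "\<dots> = (\<Sum>g\<in>Cset k d A n. \<Prod>w\<in>?L. card (F g w))"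
  proof -
    have "\<forall>g\<in>Cset k d A n. finite (PiE ?L (F g))" using finL finF by (simp add: finite_PiE)
    then have "card (Sigma (Cset k d A n) (\<lambda>g. PiE ?L (F g))) = (\<Sum>g\<in>Cset k d A n. card (PiE ?L (F g)))"
      by (intro card_SigmaI finite_Cset)
    also have "\<dots> = (\<Sum>g\<in>Cset k d A n. \<Prod>w\<in>?L. card (F g w))"
      by (rule sum.cong[OF refl]) (rule card_PiE[OF finL])
    finally show ?thesis .
  qed
  finally have c0: "card (Cset k d A (Suc n)) \<le> (\<Sum>g\<in>Cset k d A n. \<Prod>w\<in>?L. card (F g w))" .
  have c1: "real (card (Cset k d A (Suc n))) \<le> (\<Sum>g\<in>Cset k d A n. \<Prod>w\<in>?L. real (card (F g w)))"
    using of_nat_mono[OF c0, where 'a=real] by (simp only: of_nat_sum of_nat_prod)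
  have prodP: "(\<Prod>w\<in>?L. op_norm d (A (last w))) = P ^ (k ^ n)"
  proof -
    have "(\<Prod>w\<in>?L. op_norm d (A (last w))) = (\<Prod>x\<in>lev k n \<times> {..<k}. op_norm d (A (last ((\<lambda>(u,m). u @ [m]) x))))"
      unfolding lev_Suc by (rule prod.reindex[OF inj_snoc, unfolded comp_def])
    also have "\<dots> = (\<Prod>x\<in>lev k n \<times> {..<k}. op_norm d (A (snd x)))"
      by (rule prod.cong) auto
    also have "\<dots> = (\<Prod>(u,m)\<in>lev k n \<times> {..<k}. op_norm d (A m))"
      by (simp add: case_prod_beta)
    also have "\<dots> = (\<Prod>u\<in>lev k n. \<Prod>m<k. op_norm d (A m))"
      by (rule prod.cartesian_product[symmetric])
    also have "\<dots> = P ^ (k ^ n)" using lev_fin_card[of k n] by (simp add: P_def)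
    finally show ?thesis .
  qed
  have bound: "(\<Prod>w\<in>?L. real (card (F g w))) \<le> P ^ (k ^ n)" if g: "g \<in> Cset k d A n" for g
  proof -
    have "(\<Prod>w\<in>?L. real (card (F g w))) \<le> (\<Prod>w\<in>?L. op_norm d (A (last w)))"
    proof (rule prod_mono, rule conjI)
      fix w assume w: "w \<in> ?L"
      then have wne: "w \<noteq> []" by (auto simp: lev_def)
      have "last w < k" using w wne by (auto simp: lev_def words_def)
      moreover have "butlast w \<in> Delta k n" using w by (auto simp: lev_def Delta_def words_def in_set_butlastD)
      then have "g (butlast w) < d" using g by (auto simp: Cset_def)
      ultimately show "real (card (F g w)) \<le> op_norm d (A (last w))"
        unfolding F_def by (rule card_row_le[OF mm d])
    qed simp
    then show ?thesis using prodP by simp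
  qed
  have "(\<Sum>g\<in>Cset k d A n. \<Prod>w\<in>?L. real (card (F g w))) \<le> (\<Sum>g\<in>Cset k d A n. P ^ (k ^ n))"
    by (rule sum_mono) (rule bound)
  also have "\<dots> = real (card (Cset k d A n)) * P ^ (k ^ n)" by simp
  finally show ?thesis using c1 unfolding P_def by linarith
qed


lemma card_C_bound:
  assumes mm: "markov_matrices k d A" and d: "d \<ge> 1"
  shows "real (card (Cset k d A n)) \<le> real d * (\<Prod>m<k. op_norm d (A m)) ^ (\<Sum>i<n. k ^ i)"
proof (induction n)
  case 0
  have "Delta k 0 = {[]}" by (auto simp: Delta_def words_def)
  then have "Cset k d A 0 \<subseteq> {[]} \<rightarrow>\<^sub>E {..<d}" by (auto simp: Cset_def)
  moreover have "finite ({[]} \<rightarrow>\<^sub>E {..<d})" by (intro finite_PiE) auto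
  ultimately have "card (Cset k d A 0) \<le> card ({[]::nat list} \<rightarrow>\<^sub>E {..<d})" by (rule card_mono[rotated])
  also have "\<dots> = d" by (simp add: card_PiE)
  finally show ?case by simp
next
  case (Suc n)
  define P where "P = (\<Prod>m<k. op_norm d (A m))"
  have P0: "0 \<le> P" unfolding P_def using op_norm_ge1[OF mm d]
    by (intro prod_nonneg) (smt (verit) lessThan_iff)
  have "real (card (Cset k d A (Suc n))) \<le> real (card (Cset k d A n)) * P ^ (k ^ n)"
    using card_step[OF mm d] unfolding P_def .
  also have "\<dots> \<le> (real d * P ^ (\<Sum>i<n. k ^ i)) * P ^ (k ^ n)"
    using Suc.IH unfolding P_def[symmetric] by (intro mult_right_mono) (auto simp: P0)
  also have "\<dots> = real d * P ^ (\<Sum>i<Suc n. k ^ i)" by (simp add: power_add)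
  finally show ?case unfolding P_def .
qed

lemma S_eq: "(\<Sum>i\<le>n. real k ^ i) = 1 + real k * real (\<Sum>i<n. k ^ i)"
  by (induction n) (auto simp: algebra_simps)

theorem mainTheorem8:
  fixes k d :: nat and A :: "nat \<Rightarrow> nat \<Rightarrow> nat \<Rightarrow> real"
  assumes "k \<ge> 2" and "d \<ge> 1" and "markov_matrices k d A"
  defines "B \<equiv> (ln (real d) + (\<Sum>m<k. ln (op_norm d (A m)))) / real k"
  shows "limsup (\<lambda>n. ereal (ln (real (num_blocks k d A n)) / (\<Sum>i\<le>n. real k ^ i)))
           \<le> ereal B
         \<and> (\<forall>h. ((\<lambda>n. ln (real (num_blocks k d A n)) / (\<Sum>i\<le>n. real k ^ i)) \<longlonglongrightarrow> h)
                 \<longrightarrow> h \<le> B)"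
proof -
  note mm = assms(3) and d = assms(2)
  define P where "P = (\<Prod>m<k. op_norm d (A m))"
  define L where "L = ln P"
  have kpos: "real k > 0" using assms(1) by simp
  have rho1: "\<And>m. m < k \<Longrightarrow> 1 \<le> op_norm d (A m)" by (rule op_norm_ge1[OF mm d])
  have P1: "1 \<le> P" unfolding P_def by (rule prod_ge_1) (simp add: rho1)
  have LS: "L = (\<Sum>m<k. ln (op_norm d (A m)))" unfolding L_def P_def
    by (rule ln_prod) (use rho1 in force)+
  have L0: "0 \<le> L" unfolding L_def using P1 by simp
  have lnd: "0 \<le> ln (real d)" using d by simp
  have B_eq: "B = (ln (real d) + L) / real k" unfolding B_def LS ..
  have B0: "0 \<le> B" unfolding B_eq using L0 lnd kpos by simp
  have key: "ln (real (num_blocks k d A n)) / (\<Sum>i\<le>n. real k ^ i) \<le> B" if n: "n \<ge> 1" for n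
  proof -
    define E where "E = (\<Sum>i<n. k ^ i)"
    define S where "S = (\<Sum>i\<le>n. real k ^ i)"
    have SE: "S = 1 + real k * real E" unfolding S_def E_def by (rule S_eq)
    have E1: "E \<ge> 1" unfolding E_def using n
      by (metis One_nat_def Suc_le_eq lessThan_iff member_le_sum power_0 finite_lessThan zero_le)
    have Spos: "S > 0" using SE kpos by (simp add: add_pos_nonneg)
    have Sk: "real k \<le> S" using SE E1 kpos
      by (smt (verit) mult_le_cancel_left1 of_nat_le_iff One_nat_def of_nat_1)
    show ?thesis
    proof (cases "num_blocks k d A n = 0")
      case True then show ?thesis using B0 by simp
    next
      case False
      have pd: "real (num_blocks k d A n) \<le> real d * P ^ E"
        using blocks_le[of k d A n] card_C_bound[OF mm d, of n] unfolding P_def E_def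
        by (meson of_nat_le_iff order_trans)
      have Ppos: "P > 0" using P1 by simp
      have "ln (real (num_blocks k d A n)) \<le> ln (real d * P ^ E)"
        using False pd Ppos d by (subst ln_le_cancel_iff) auto
      also have "\<dots> = ln (real d) + real E * L"
        using Ppos d by (simp add: ln_mult ln_realpow L_def)
      finally have lnp: "ln (real (num_blocks k d A n)) \<le> ln (real d) + real E * L" .
      have "(ln (real d) + real E * L) * real k \<le> (ln (real d) + L) * S"
      proof -
        have "ln (real d) * real k \<le> ln (real d) * S" using Sk lnd by (rule mult_left_mono)
        moreover have "real E * L * real k \<le> L * S" using SE L0 by (simp add: algebra_simps)
        ultimately show ?thesis by (simp add: algebra_simps)
      qed
      then have "(ln (real d) + real E * L) / S \<le> (ln (real d) + L) / real k"
        using Spos kpos by (simp add: field_simps)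
      moreover have "ln (real (num_blocks k d A n)) / S \<le> (ln (real d) + real E * L) / S"
        using lnp Spos by (simp add: divide_right_mono)
      ultimately show ?thesis unfolding S_def B_eq by linarith
    qed
  qed
  have ev: "eventually (\<lambda>n. ln (real (num_blocks k d A n)) / (\<Sum>i\<le>n. real k ^ i) \<le> B) sequentially"
    using key by (intro eventually_sequentiallyI[of 1]) auto
  have "limsup (\<lambda>n. ereal (ln (real (num_blocks k d A n)) / (\<Sum>i\<le>n. real k ^ i))) \<le> ereal B"
    by (rule Limsup_bounded) (use ev in \<open>auto elim: eventually_mono\<close>)
  moreover have "\<forall>h. ((\<lambda>n. ln (real (num_blocks k d A n)) / (\<Sum>i\<le>n. real k ^ i)) \<longlonglongrightarrow> h) \<longrightarrow> h \<le> B"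
    using ev by (auto intro: tendsto_upperbound)
  ultimately show ?thesis by blast
qed

end
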